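(* Let $S(t)$ be the $\alpha$-stable inverse subordinator, $\alpha\in(0,1)$, and assume $K=Z_0>0$, $r=0$, $\sigma>0$, $\sigma^{Ba}=\sigma Z_0$, $T>0$. Then the fair call prices in the subordinated Bachelier and subordinated Black–Scholes models satisfy $$0\le C^{Ba}_S(T)-C_S(T)\le \frac{T^{\frac32\alpha}\,\Gamma\!\left(\tfrac52\right)}{\Gamma\!\left(\tfrac32\alpha+1\right)}\cdot\frac{Z_0}{12\sqrt{2\pi}}\,\sigma^3 .$$
   Context: The $\alpha$-stable inverse subordinator is $S(t)=\inf\{\tau\ge0: U(\tau)\ge t\}$ where $U$ is the $\alpha$-stable subordinator, i.e. $\mathbb{E}e^{-uU(t)}=e^{-tu^\alpha}$. $B$ is a standard Brownian motion independent of $S$. For $\tau\ge0$, $C^{Ba}(\tau)=\sigma^{Ba}\sqrt{\tau}/\sqrt{2\pi}$ is the classical at-the-money Bachelier call price with $r=0$ and $C(\tau)=Z_0(2\Phi(\sigma\sqrt\tau/2)-1)$ is the classical at-the-money Black–Scholes call price with $r=0$ ($\Phi$ the standard normal CDF). The subordinated fair prices are $C^{Ba}_S(T)=\mathbb{E}\,C^{Ba}(S(T))$ and $C_S(T)=\mathbb{E}\,C(S(T))$. *)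

theory Defs
  imports "HOL-Probability.Probability"
begin

definition Phi :: "real \<Rightarrow> real" where
  "Phi x = (LINT y:{..x}|lborel. std_normal_density y)"

definition stable_subordinator ::
  "'a measure \<Rightarrow> real \<Rightarrow> (real \<Rightarrow> 'a \<Rightarrow> real) \<Rightarrow> bool" where
  "stable_subordinator M \<alpha> U \<longleftrightarrow>
     prob_space M \<and>
     (\<forall>t\<ge>0. U t \<in> borel_measurable M) \<and>
     (\<forall>\<omega>\<in>space M. U 0 \<omega> = 0) \<and>
     (\<forall>\<omega>\<in>space M. mono_on {0..} (\<lambda>t. U t \<omega>)) \<and>
     (\<forall>\<omega>\<in>space M. \<forall>t\<ge>0. continuous (at_right t) (\<lambda>s. U s \<omega>)) \<and>
     (\<forall>(n::nat) (t::nat \<Rightarrow> real). 0 \<le> t 0 \<and> (\<forall>i<n. t i \<le> t (Suc i)) \<longrightarrow>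
        prob_space.indep_vars M (\<lambda>_. borel) (\<lambda>i \<omega>. U (t (Suc i)) \<omega> - U (t i) \<omega>) {..<n}) \<and>
     (\<forall>s\<ge>0. \<forall>t\<ge>0. distr M borel (\<lambda>\<omega>. U (s + t) \<omega> - U s \<omega>) = distr M borel (U t)) \<and>
     (\<forall>t\<ge>0. \<forall>u\<ge>0. (\<integral>\<omega>. exp (- u * U t \<omega>) \<partial>M) = exp (- t * u powr \<alpha>))"

definition inverse_subordinator :: "(real \<Rightarrow> 'a \<Rightarrow> real) \<Rightarrow> real \<Rightarrow> 'a \<Rightarrow> real" where
  "inverse_subordinator U t \<omega> = Inf {\<tau>. 0 \<le> \<tau> \<and> t \<le> U \<tau> \<omega>}"

text \<open>At-the-money call prices with r = 0.\<close>
definition bachelier_atm :: "real \<Rightarrow> real \<Rightarrow> real" where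
  "bachelier_atm \<sigma>Ba \<tau> = \<sigma>Ba * sqrt \<tau> / sqrt (2 * pi)"

definition bs_atm :: "real \<Rightarrow> real \<Rightarrow> real \<Rightarrow> real" where
  "bs_atm Z0 \<sigma> \<tau> = Z0 * (2 * Phi (\<sigma> * sqrt \<tau> / 2) - 1)"

end

theory Submission
  imports Defs
begin


lemma phi_int: "integrable lborel std_normal_density"
  using integrable_std_normal_moment[of 0] by simp

lemma phi_ind_int: "integrable lborel (\<lambda>y. indicator A y *\<^sub>R std_normal_density y)" if "A \<in> sets borel"
  using integrable_mult_indicator[of A lborel std_normal_density] phi_int that by simp

lemma Phi_eq: "Phi x = integral\<^sup>L lborel (\<lambda>y. indicator {..x} y *\<^sub>R std_normal_density y)"
  unfolding Phi_def set_lebesgue_integral_def by simp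

lemma ftc0: "a \<le> b \<Longrightarrow> integral\<^sup>L lborel (\<lambda>y. indicator {a..b} y *\<^sub>R (c::real)) = c * (b - a)"
proof -
  assume "a \<le> b"
  have "integral\<^sup>L lborel (\<lambda>y. indicator {a..b} y *\<^sub>R (\<lambda>_. c) y) = (\<lambda>y. c * y) b - (\<lambda>y. c*y) a"
    by (rule integral_FTC_atLeastAtMost[OF \<open>a \<le> b\<close>])
       (auto intro!: derivative_eq_intros simp: has_real_derivative_iff_has_vector_derivative[symmetric])
  then show ?thesis by (simp add: algebra_simps)
qed

lemma pt0: "integral\<^sup>L lborel (\<lambda>y. indicator {0::real} y *\<^sub>R (f y::real)) = 0"
proof -
  have "AE y in lborel. indicator {0::real} y *\<^sub>R f y = 0"
    using AE_lborel_singleton[of 0] by eventually_elim (auto simp add: indicator_def)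
  then show ?thesis by (simp add: integral_eq_zero_AE)
qed

lemma Phi0_eq:  "Phi 0 = integral\<^sup>L lborel (\<lambda>y. indicator {..<0} y *\<^sub>R std_normal_density y)"
  proof -
  have "Phi 0 = integral\<^sup>L lborel (\<lambda>y. indicator {..<0} y *\<^sub>R std_normal_density y + indicator {0..0} y *\<^sub>R std_normal_density y)"
    unfolding Phi_eq by (rule Bochner_Integration.integral_cong) (auto split: split_indicator)
  also have "\<dots> = integral\<^sup>L lborel (\<lambda>y. indicator {..<0} y *\<^sub>R std_normal_density y) + integral\<^sup>L lborel (\<lambda>y. indicator {0..0} y *\<^sub>R std_normal_density y)"
    by (intro Bochner_Integration.integral_add phi_ind_int) auto
  finally show ?thesis using pt0 by simp
  qed

lemma Phi_split: assumes "0 \<le> x"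
  shows "Phi x = Phi 0 + integral\<^sup>L lborel (\<lambda>y. indicator {0..x} y *\<^sub>R std_normal_density y)"
proof -
  have i: "indicator {..x} (y::real) = indicator {..<0} y + (indicator {0..x} y :: real)" for y
    using assms by (auto split: split_indicator)
  have i0: "indicator {..0} (y::real) = indicator {..<0} y + (indicator {0..0} y :: real)" for y
    by (auto split: split_indicator)
  have z: "integral\<^sup>L lborel (\<lambda>y. indicator {0..0} y *\<^sub>R std_normal_density y) = 0"
    using pt0 by simp
  have "Phi x = integral\<^sup>L lborel (\<lambda>y. indicator {..<0} y *\<^sub>R std_normal_density y + indicator {0..x} y *\<^sub>R std_normal_density y)"
    unfolding Phi_eq by (simp add: i algebra_simps)
  also have "\<dots> = integral\<^sup>L lborel (\<lambda>y. indicator {..<0} y *\<^sub>R std_normal_density y) + integral\<^sup>L lborel (\<lambda>y. indicator {0..x} y *\<^sub>R std_normal_density y)"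
    by (intro Bochner_Integration.integral_add phi_ind_int) auto
  moreover note Phi0_eq
  ultimately show ?thesis by simp
qed

lemma Phi_0: "Phi 0 = 1/2"
proof -
  have one: "integral\<^sup>L lborel std_normal_density = 1"
    using integral_std_normal_moment_even[of 0] by simp
  have sp: "std_normal_density y = indicator {..<0} y *\<^sub>R std_normal_density y + indicator {0..} y *\<^sub>R std_normal_density y" for y
    by (auto split: split_indicator)
  have a: "integral\<^sup>L lborel std_normal_density = integral\<^sup>L lborel (\<lambda>y. indicator {..<0} y *\<^sub>R std_normal_density y) + integral\<^sup>L lborel (\<lambda>y. indicator {0..} y *\<^sub>R std_normal_density y)"
  proof -
    have "integral\<^sup>L lborel std_normal_density = integral\<^sup>L lborel (\<lambda>y. indicator {..<0} y *\<^sub>R std_normal_density y + indicator {0..} y *\<^sub>R std_normal_density y)"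
      by (rule Bochner_Integration.integral_cong) (auto split: split_indicator)
    also have "\<dots> = integral\<^sup>L lborel (\<lambda>y. indicator {..<0} y *\<^sub>R std_normal_density y) + integral\<^sup>L lborel (\<lambda>y. indicator {0..} y *\<^sub>R std_normal_density y)"
      by (intro Bochner_Integration.integral_add phi_ind_int) auto
    finally show ?thesis .
  qed
  have sp2: "indicator {0..} y *\<^sub>R std_normal_density y = indicator {0<..} y *\<^sub>R std_normal_density y + indicator {0..0} y *\<^sub>R std_normal_density y" for y
    by (auto split: split_indicator)
  have z: "integral\<^sup>L lborel (\<lambda>y. indicator {0..0} y *\<^sub>R std_normal_density y) = 0"
    using pt0 by simp
  have b: "integral\<^sup>L lborel (\<lambda>y. indicator {0..} y *\<^sub>R std_normal_density y) = integral\<^sup>L lborel (\<lambda>y. indicator {0<..} y *\<^sub>R std_normal_density y)"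
  proof -
    have "integral\<^sup>L lborel (\<lambda>y. indicator {0..} y *\<^sub>R std_normal_density y) = integral\<^sup>L lborel (\<lambda>y. indicator {0<..} y *\<^sub>R std_normal_density y + indicator {0..0} y *\<^sub>R std_normal_density y)"
      by (rule Bochner_Integration.integral_cong) (auto split: split_indicator)
    also have "\<dots> = integral\<^sup>L lborel (\<lambda>y. indicator {0<..} y *\<^sub>R std_normal_density y) + integral\<^sup>L lborel (\<lambda>y. indicator {0..0} y *\<^sub>R std_normal_density y)"
      by (intro Bochner_Integration.integral_add phi_ind_int) auto
    finally show ?thesis using z by simp
  qed
  have c: "integral\<^sup>L lborel (\<lambda>y. indicator {..<0} y *\<^sub>R std_normal_density y) = integral\<^sup>L lborel (\<lambda>y. indicator {0<..} y *\<^sub>R std_normal_density y)"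
    by (subst lborel_integral_real_affine[where c="-1" and t=0])
       (auto simp: std_normal_density_def indicator_def)
  have "Phi 0 = integral\<^sup>L lborel (\<lambda>y. indicator {..<0} y *\<^sub>R std_normal_density y)"
    by (rule Phi0_eq)
  then show ?thesis using one a b c by simp
qed

lemma Icc_int: "continuous_on {a::real..b} f \<Longrightarrow> integrable lborel (\<lambda>y. indicator {a..b} y *\<^sub>R (f y::real))"
  using borel_integrable_atLeastAtMost'[of a b f] unfolding set_integrable_def by simp

lemma I_bounds: assumes x: "0 \<le> x"
  shows "integral\<^sup>L lborel (\<lambda>y. indicator {0..x} y *\<^sub>R std_normal_density y) \<le> x / sqrt (2*pi)"
    and "(x - x^3/6) / sqrt (2*pi) \<le> integral\<^sup>L lborel (\<lambda>y. indicator {0..x} y *\<^sub>R std_normal_density y)"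
proof -
  have "integral\<^sup>L lborel (\<lambda>y. indicator {0..x} y *\<^sub>R std_normal_density y) \<le> integral\<^sup>L lborel (\<lambda>y. indicator {0..x} y *\<^sub>R (1 / sqrt (2*pi)))"
  proof (rule integral_mono)
    show "integrable lborel (\<lambda>y. indicator {0..x} y *\<^sub>R std_normal_density y)" by (rule phi_ind_int) auto
    show "integrable lborel (\<lambda>y. indicator {0..x} y *\<^sub>R (1 / sqrt (2*pi)))" by (rule Icc_int) auto
    fix y show "indicator {0..x} y *\<^sub>R std_normal_density y \<le> indicator {0..x} y *\<^sub>R (1 / sqrt (2*pi))"
      by (auto simp: std_normal_density_def indicator_def intro!: divide_right_mono)
  qed
  also have "\<dots> = x / sqrt (2*pi)" using ftc0[OF x, of "1 / sqrt (2*pi)"] by simp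
  finally show "integral\<^sup>L lborel (\<lambda>y. indicator {0..x} y *\<^sub>R std_normal_density y) \<le> x / sqrt (2*pi)" .
  have F: "integral\<^sup>L lborel (\<lambda>y. indicator {0..x} y *\<^sub>R ((1 - y^2/2) / sqrt (2*pi))) = (\<lambda>y. (y - y^3/6)/ sqrt (2*pi)) x - (\<lambda>y. (y - y^3/6)/ sqrt (2*pi)) 0"
    by (rule integral_FTC_atLeastAtMost[OF x])
       (auto intro!: derivative_eq_intros continuous_intros simp: has_real_derivative_iff_has_vector_derivative[symmetric] field_simps power2_eq_square)
  have "(x - x^3/6) / sqrt (2*pi) = integral\<^sup>L lborel (\<lambda>y. indicator {0..x} y *\<^sub>R ((1 - y^2/2) / sqrt (2*pi)))"
    using F by simp
  also have "\<dots> \<le> integral\<^sup>L lborel (\<lambda>y. indicator {0..x} y *\<^sub>R std_normal_density y)"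
  proof (rule integral_mono)
    show "integrable lborel (\<lambda>y. indicator {0..x} y *\<^sub>R std_normal_density y)" by (rule phi_ind_int) auto
    show "integrable lborel (\<lambda>y. indicator {0..x} y *\<^sub>R ((1 - y^2/2) / sqrt (2*pi)))" by (rule Icc_int) (auto intro!: continuous_intros)
    fix y :: real
    have "1 - y^2/2 \<le> exp (-(y^2/2))" using exp_ge_add_one_self[of "-(y^2/2)"] by simp
    then have "(1 - y^2/2) / sqrt (2*pi) \<le> std_normal_density y"
      by (simp add: std_normal_density_def divide_right_mono)
    then show "indicator {0..x} y *\<^sub>R ((1 - y^2/2) / sqrt (2*pi)) \<le> indicator {0..x} y *\<^sub>R std_normal_density y"
      by (auto simp: indicator_def)
  qed
  finally show "(x - x^3/6) / sqrt (2*pi) \<le> integral\<^sup>L lborel (\<lambda>y. indicator {0..x} y *\<^sub>R std_normal_density y)" .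
qed

lemma pointwise: assumes "0 \<le> \<tau>" "0 < \<sigma>" "0 < Z0"
  shows "0 \<le> bachelier_atm (\<sigma> * Z0) \<tau> - bs_atm Z0 \<sigma> \<tau>"
    and "bachelier_atm (\<sigma> * Z0) \<tau> - bs_atm Z0 \<sigma> \<tau> \<le> Z0 * \<sigma>^3 * sqrt \<tau> ^ 3 / (24 * sqrt (2*pi))"
proof -
  define x where "x = \<sigma> * sqrt \<tau> / 2"
  have x0: "0 \<le> x" using assms by (simp add: x_def)
  define I where "I = integral\<^sup>L lborel (\<lambda>y. indicator {0..x} y *\<^sub>R std_normal_density y)"
  have e: "bachelier_atm (\<sigma> * Z0) \<tau> - bs_atm Z0 \<sigma> \<tau> = 2 * Z0 * (x / sqrt (2*pi) - I)"
  proof -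
    have "Phi x = 1/2 + I" using Phi_split[OF x0] Phi_0 I_def by simp
    then show ?thesis unfolding bachelier_atm_def bs_atm_def x_def[symmetric]
      by (simp add: x_def field_simps)
  qed
  have b1: "I \<le> x / sqrt (2*pi)" and b2: "(x - x^3/6) / sqrt (2*pi) \<le> I"
    using I_bounds[OF x0] by (auto simp: I_def)
  show "0 \<le> bachelier_atm (\<sigma> * Z0) \<tau> - bs_atm Z0 \<sigma> \<tau>" using e b1 assms by simp
  have "x / sqrt (2*pi) - I \<le> x^3 / 6 / sqrt (2*pi)" using b2 by (simp add: diff_divide_distrib)
  then have "2 * Z0 * (x / sqrt (2*pi) - I) \<le> 2 * Z0 * (x^3 / 6 / sqrt (2*pi))"
    using assms by (intro mult_left_mono) auto
  also have "\<dots> = Z0 * \<sigma>^3 * sqrt \<tau> ^ 3 / (24 * sqrt (2*pi))"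
    by (simp add: x_def field_simps power_mult_distrib)
  finally show "bachelier_atm (\<sigma> * Z0) \<tau> - bs_atm Z0 \<sigma> \<tau> \<le> Z0 * \<sigma>^3 * sqrt \<tau> ^ 3 / (24 * sqrt (2*pi))"
    using e by simp
qed



context prob_space begin

lemma bdd_int: "(f::_\<Rightarrow>real) \<in> borel_measurable M \<Longrightarrow> (\<And>x. x \<in> space M \<Longrightarrow> \<bar>f x\<bar> \<le> B) \<Longrightarrow> integrable M f"
  by (rule integrable_const_bound[where B=B]) auto

lemma exp_bound:
  fixes g :: "'a \<Rightarrow> real"
  assumes "integrable M g" "\<And>x. x \<in> space M \<Longrightarrow> \<bar>g x\<bar> \<le> e"
  shows "\<bar>expectation g\<bar> \<le> e"
proof -
  have "expectation g \<le> expectation (\<lambda>_. e)"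
    using assms by (intro integral_mono) (auto simp: abs_le_iff)
  moreover have "expectation (\<lambda>_. -e) \<le> expectation g"
  proof (rule integral_mono)
    fix x assume "x \<in> space M" then show "-e \<le> g x" using assms(2)[of x] by linarith
  qed (use assms in auto)
  ultimately show ?thesis by (simp add: prob_space)
qed

lemma poly_eq:
  fixes A B :: "'a \<Rightarrow> real"
  assumes [measurable]: "A \<in> borel_measurable M" "B \<in> borel_measurable M"
    and A01: "\<And>x. x \<in> space M \<Longrightarrow> A x \<in> {0..1}" and B01: "\<And>x. x \<in> space M \<Longrightarrow> B x \<in> {0..1}"
    and mom: "\<And>n::nat. expectation (\<lambda>x. A x ^ n) = expectation (\<lambda>x. B x ^ n)"
    and p: "real_polynomial_function p"
  shows "expectation (\<lambda>x. p (A x)) = expectation (\<lambda>x. p (B x))"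
proof -
  obtain a n where pe: "p = (\<lambda>x. \<Sum>i\<le>n. a i * x^i)" using p real_polynomial_function_iff_sum by blast
  have iA: "integrable M (\<lambda>x. A x ^ i)" for i
    by (rule bdd_int[where B=1]) (use A01 in \<open>auto simp: power_le_one abs_le_iff\<close>)
  have iB: "integrable M (\<lambda>x. B x ^ i)" for i
    by (rule bdd_int[where B=1]) (use B01 in \<open>auto simp: power_le_one abs_le_iff\<close>)
  have "expectation (\<lambda>x. p (A x)) = (\<Sum>i\<le>n. a i * expectation (\<lambda>x. A x ^ i))"
    unfolding pe by (subst Bochner_Integration.integral_sum) (auto intro!: iA)
  also have "\<dots> = (\<Sum>i\<le>n. a i * expectation (\<lambda>x. B x ^ i))" using mom by simp
  also have "\<dots> = expectation (\<lambda>x. p (B x))"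
    unfolding pe by (subst Bochner_Integration.integral_sum) (auto intro!: iB)
  finally show ?thesis .
qed

lemma cont_eq:
  fixes A B :: "'a \<Rightarrow> real" and f :: "real \<Rightarrow> real"
  assumes [measurable]: "A \<in> borel_measurable M" "B \<in> borel_measurable M"
    and A01: "\<And>x. x \<in> space M \<Longrightarrow> A x \<in> {0..1}" and B01: "\<And>x. x \<in> space M \<Longrightarrow> B x \<in> {0..1}"
    and mom: "\<And>n::nat. expectation (\<lambda>x. A x ^ n) = expectation (\<lambda>x. B x ^ n)"
    and f: "continuous_on UNIV f"
  shows "expectation (\<lambda>x. f (A x)) = expectation (\<lambda>x. f (B x))"
proof -
  have fm[measurable]: "f \<in> borel_measurable borel" using f by (rule borel_measurable_continuous_onI)
  obtain C where C: "\<And>x. x \<in> {0..1} \<Longrightarrow> \<bar>f x\<bar> \<le> C"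
    using compact_imp_bounded[OF compact_continuous_image[OF continuous_on_subset[OF f] compact_Icc, of 0 1]]
    by (force simp: bounded_iff)
  have ifA: "integrable M (\<lambda>x. f (A x))" by (rule bdd_int[where B=C]) (use A01 C in auto)
  have ifB: "integrable M (\<lambda>x. f (B x))" by (rule bdd_int[where B=C]) (use B01 C in auto)
  have "\<bar>expectation (\<lambda>x. f (A x)) - expectation (\<lambda>x. f (B x))\<bar> \<le> 2 * e" if e: "e > 0" for e
  proof -
    obtain g where g: "real_polynomial_function g" "\<And>x. x \<in> {0..1} \<Longrightarrow> \<bar>f x - g x\<bar> < e"
      using Stone_Weierstrass_real_polynomial_function[OF compact_Icc continuous_on_subset[OF f] e] by blast
    have gc: "continuous_on UNIV g" using g(1) continuous_on_polymonial_function real_polynomial_function_eq by blast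
    have gm[measurable]: "g \<in> borel_measurable borel" using gc by (rule borel_measurable_continuous_onI)
    obtain D where D: "\<And>x. x \<in> {0..1} \<Longrightarrow> \<bar>g x\<bar> \<le> D"
      using compact_imp_bounded[OF compact_continuous_image[OF continuous_on_subset[OF gc] compact_Icc, of 0 1]]
      by (force simp: bounded_iff)
    have igA: "integrable M (\<lambda>x. g (A x))" by (rule bdd_int[where B=D]) (use A01 D in auto)
    have igB: "integrable M (\<lambda>x. g (B x))" by (rule bdd_int[where B=D]) (use B01 D in auto)
    have 1: "\<bar>expectation (\<lambda>x. f (A x) - g (A x))\<bar> \<le> e"
      by (rule exp_bound) (use A01 g(2) ifA igA in \<open>auto intro: less_imp_le\<close>)
    have 2: "\<bar>expectation (\<lambda>x. f (B x) - g (B x))\<bar> \<le> e"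
      by (rule exp_bound) (use B01 g(2) ifB igB in \<open>auto intro: less_imp_le\<close>)
    have 3: "expectation (\<lambda>x. g (A x)) = expectation (\<lambda>x. g (B x))"
      by (rule poly_eq[OF assms(1,2) A01 B01 mom g(1)])
    show ?thesis using 1 2 3 ifA ifB igA igB by (simp add: Bochner_Integration.integral_diff)
  qed
  then have "\<bar>expectation (\<lambda>x. f (A x)) - expectation (\<lambda>x. f (B x))\<bar> \<le> 0 + e" if "e > 0" for e
    using that by (metis add_0 field_sum_of_halves half_gt_zero mult_2)
  then have "\<bar>expectation (\<lambda>x. f (A x)) - expectation (\<lambda>x. f (B x))\<bar> \<le> 0"
    by (rule field_le_epsilon)
  then show ?thesis by simp
qed


lemma laplace_cmp:
  fixes X Y :: "'a \<Rightarrow> real"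
  assumes [measurable]: "X \<in> borel_measurable M" "Y \<in> borel_measurable M"
    and X0: "\<And>x. x \<in> space M \<Longrightarrow> 0 \<le> X x" and Y0: "\<And>x. x \<in> space M \<Longrightarrow> 0 \<le> Y x"
    and lap: "\<And>n::nat. expectation (\<lambda>x. exp (- real n * X x)) = expectation (\<lambda>x. exp (- real n * Y x))"
  shows "prob {x\<in>space M. X x < T} \<le> prob {x\<in>space M. Y x \<le> T}"
proof -
  define c where "c = exp (- T)"
  define g where "g k y = max 0 (min 1 (real k * (y - c) + 1))" for k :: nat and y :: real
  have gc: "continuous_on UNIV (g k)" for k unfolding g_def by (intro continuous_intros)
  have gm[measurable]: "g k \<in> borel_measurable borel" for k using gc by (rule borel_measurable_continuous_onI)
  have A01: "exp (- X x) \<in> {0..1}" if "x \<in> space M" for x using X0[OF that] by auto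
  have B01: "exp (- Y x) \<in> {0..1}" if "x \<in> space M" for x using Y0[OF that] by auto
  have pw: "exp (- Z) ^ n = exp (- real n * Z)" for Z :: real and n
    using exp_of_nat_mult[of n "- Z"] by simp
  have mom: "expectation (\<lambda>x. exp (- X x) ^ n) = expectation (\<lambda>x. exp (- Y x) ^ n)" for n :: nat
    unfolding pw by (rule lap)
  have eq: "expectation (\<lambda>x. g k (exp (- X x))) = expectation (\<lambda>x. g k (exp (- Y x)))" for k
    by (rule cont_eq[OF _ _ A01 B01 mom gc]) auto
  have ig: "integrable M (\<lambda>x. g k (exp (- Z x)))" if [measurable]: "Z \<in> borel_measurable M" for k Z
    by (rule bdd_int[where B=1]) (auto simp: g_def)
  have le: "prob {x\<in>space M. X x < T} \<le> expectation (\<lambda>x. g k (exp (- Y x)))" for k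
  proof -
    have "prob {x\<in>space M. X x < T} = expectation (indicator {x\<in>space M. X x < T})"
      by (simp add: integral_indicator)
    also have "\<dots> \<le> expectation (\<lambda>x. g k (exp (- X x)))"
    proof (rule integral_mono)
      show "integrable M (indicator {x \<in> space M. X x < T} :: 'a \<Rightarrow> real)"
        by (rule integrable_real_indicator) (auto simp: less_top[symmetric])
      show "integrable M (\<lambda>x. g k (exp (- X x)))" by (rule ig) simp
      fix x assume "x \<in> space M"
      show "indicator {x \<in> space M. X x < T} x \<le> g k (exp (- X x))"
      proof (cases "X x < T")
        case True
        then have "c \<le> exp (- X x)" by (simp add: c_def)
        then have "1 \<le> real k * (exp (- X x) - c) + 1" by simp
        then show ?thesis using True \<open>x \<in> space M\<close> by (simp add: g_def)
      qed (simp add: g_def)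
    qed
    finally show ?thesis using eq[of k] by simp
  qed
  have lim: "(\<lambda>k. expectation (\<lambda>x. g k (exp (- Y x)))) \<longlonglongrightarrow> expectation (indicator {x\<in>space M. Y x \<le> T})"
  proof (rule integral_dominated_convergence[where w="\<lambda>_. 1"])
    show "AE x in M. (\<lambda>k. g k (exp (- Y x))) \<longlonglongrightarrow> indicator {x\<in>space M. Y x \<le> T} x"
    proof (rule AE_I2)
      fix x assume x: "x \<in> space M"
      show "(\<lambda>k. g k (exp (- Y x))) \<longlonglongrightarrow> indicator {x\<in>space M. Y x \<le> T} x"
      proof (cases "Y x \<le> T")
        case True
        then have "c \<le> exp (- Y x)" by (simp add: c_def)
        then have "g k (exp (- Y x)) = 1" for k by (simp add: g_def)
        then show ?thesis using True x by simp
      next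
        case False
        then have cb: "exp (- Y x) < c" by (simp add: c_def)
        obtain N :: nat where N: "1 / (c - exp (- Y x)) \<le> real N" using real_arch_simple by blast
        have "g k (exp (- Y x)) = 0" if "N \<le> k" for k
        proof -
          have "1 / (c - exp (- Y x)) \<le> real k" using N that by (meson order_trans of_nat_le_iff)
          then have "1 \<le> real k * (c - exp (- Y x))" using cb by (simp add: field_simps)
          then show ?thesis by (simp add: g_def algebra_simps)
        qed
        then have "eventually (\<lambda>k. g k (exp (- Y x)) = 0) sequentially"
          unfolding eventually_sequentially by blast
        then have "(\<lambda>k. g k (exp (- Y x))) \<longlonglongrightarrow> 0" by (rule tendsto_eventually)
        then show ?thesis using False by simp
      qed
    qed
    show "\<And>k. AE x in M. norm (g k (exp (- Y x))) \<le> 1" by (auto simp: g_def)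
  qed auto
  have "prob {x\<in>space M. X x < T} \<le> expectation (indicator {x\<in>space M. Y x \<le> T})"
    using lim le by (intro LIMSEQ_le_const) auto
  then show ?thesis by (simp add: integral_indicator)
qed

end


locale stab =
  fixes M :: "'a measure" and \<alpha> :: real and U :: "real \<Rightarrow> 'a \<Rightarrow> real"
  assumes ss: "stable_subordinator M \<alpha> U" and a0: "0 < \<alpha>" and a1: "\<alpha> < 1"
begin

lemma ssD1: "prob_space M"
  using ss unfolding stable_subordinator_def by (elim conjE) assumption
lemma ssD2: "\<forall>t\<ge>0. U t \<in> borel_measurable M"
  using ss unfolding stable_subordinator_def by (elim conjE) assumption
lemma ssD3: "\<forall>\<omega>\<in>space M. U 0 \<omega> = 0"
  using ss unfolding stable_subordinator_def by (elim conjE) assumption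
lemma ssD4: "\<forall>\<omega>\<in>space M. mono_on {0..} (\<lambda>t. U t \<omega>)"
  using ss unfolding stable_subordinator_def by (elim conjE) assumption
lemma ssD5: "\<forall>\<omega>\<in>space M. \<forall>t\<ge>0. continuous (at_right t) (\<lambda>s. U s \<omega>)"
  using ss unfolding stable_subordinator_def by (elim conjE) assumption
lemma ssD6: "\<forall>t\<ge>0. \<forall>u\<ge>0. (\<integral>\<omega>. exp (- u * U t \<omega>) \<partial>M) = exp (- t * u powr \<alpha>)"
  using ss unfolding stable_subordinator_def by (elim conjE) assumption

lemma ps: "prob_space M" by (rule ssD1)

sublocale prob_space M by (rule ps)

lemma Um: "t \<ge> 0 \<Longrightarrow> U t \<in> borel_measurable M" using ssD2 by blast
lemma Umn[measurable]: "U (real n) \<in> borel_measurable M" by (rule Um) simp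
lemma Um1[measurable]: "U 1 \<in> borel_measurable M" by (rule Um) simp
lemma U0: "\<omega> \<in> space M \<Longrightarrow> U 0 \<omega> = 0" using ssD3 by blast
lemma Umono: "\<omega> \<in> space M \<Longrightarrow> 0 \<le> s \<Longrightarrow> s \<le> t \<Longrightarrow> U s \<omega> \<le> U t \<omega>"
  using ssD4 by (metis atLeast_iff mono_onD order_trans)
lemma Unn: "\<omega> \<in> space M \<Longrightarrow> 0 \<le> t \<Longrightarrow> 0 \<le> U t \<omega>"
  using Umono[of \<omega> 0 t] U0 by simp
lemma Urc: "\<omega> \<in> space M \<Longrightarrow> 0 \<le> t \<Longrightarrow> ((\<lambda>s. U s \<omega>) \<longlongrightarrow> U t \<omega>) (at_right t)"
  using ssD5 by (auto simp: continuous_within)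
lemma Ulap: "0 \<le> t \<Longrightarrow> 0 \<le> u \<Longrightarrow> expectation (\<lambda>\<omega>. exp (- u * U t \<omega>)) = exp (- t * u powr \<alpha>)"
  using ssD6 by blast

definition Aset where "Aset T \<omega> = {\<tau>. 0 \<le> \<tau> \<and> T \<le> U \<tau> \<omega>}"

lemma S_le_iff:
  assumes w: "\<omega> \<in> space M" and ne: "Aset T \<omega> \<noteq> {}" and y: "0 \<le> y"
  shows "inverse_subordinator U T \<omega> \<le> y \<longleftrightarrow> T \<le> U y \<omega>"
proof
  have bdd: "bdd_below (Aset T \<omega>)" unfolding Aset_def by (rule bdd_belowI[of _ 0]) auto
  assume le: "inverse_subordinator U T \<omega> \<le> y"
  have all: "T \<le> U z \<omega>" if z: "y < z" for z
  proof -
    have "Inf (Aset T \<omega>) < z" using le z unfolding inverse_subordinator_def Aset_def by simp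
    then obtain a where "a \<in> Aset T \<omega>" "a < z" using cInf_less_iff[OF ne bdd] by blast
    then show "T \<le> U z \<omega>" using Umono[OF w, of a z] unfolding Aset_def by auto
  qed
  have ev: "eventually (\<lambda>z. T \<le> U z \<omega>) (at_right y)"
    using eventually_at_right_less[of y] by eventually_elim (rule all)
  show "T \<le> U y \<omega>"
    by (rule tendsto_lowerbound[OF Urc[OF w y] ev]) simp
next
  assume "T \<le> U y \<omega>"
  then have "y \<in> Aset T \<omega>" using y unfolding Aset_def by simp
  moreover have bdd: "bdd_below (Aset T \<omega>)" unfolding Aset_def by (rule bdd_belowI[of _ 0]) auto
  ultimately show "inverse_subordinator U T \<omega> \<le> y"
    unfolding inverse_subordinator_def Aset_def[symmetric] by (rule cInf_lower)
qed

lemma S_nonneg: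
  assumes ne: "Aset T \<omega> \<noteq> {}"
  shows "0 \<le> inverse_subordinator U T \<omega>"
  unfolding inverse_subordinator_def Aset_def[symmetric]
  by (rule cInf_greatest[OF ne]) (auto simp: Aset_def)

lemma Aset_ne: "\<omega> \<in> space M \<Longrightarrow> Aset T \<omega> \<noteq> {} \<longleftrightarrow> (\<exists>n::nat. T \<le> U (real n) \<omega>)"
proof
  assume w: "\<omega> \<in> space M" and "Aset T \<omega> \<noteq> {}"
  then obtain a where a: "0 \<le> a" "T \<le> U a \<omega>" unfolding Aset_def by auto
  obtain n :: nat where "a \<le> real n" using real_arch_simple by blast
  then show "\<exists>n::nat. T \<le> U (real n) \<omega>" using Umono[OF w a(1), of n] a by (meson order_trans)
next
  assume "\<exists>n::nat. T \<le> U (real n) \<omega>" then show "Aset T \<omega> \<noteq> {}" unfolding Aset_def by force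
qed

lemma S_meas[measurable]: "inverse_subordinator U T \<in> borel_measurable M"
proof -
  let ?S = "inverse_subordinator U T"
  define N where "N = {\<omega> \<in> space M. \<forall>n::nat. U (real n) \<omega> < T}"
  have Nm: "N \<in> sets M" unfolding N_def by measurable
  have SN: "?S \<omega> = Inf {}" if "\<omega> \<in> N" for \<omega>
  proof -
    have w: "\<omega> \<in> space M" and "\<forall>n::nat. U (real n) \<omega> < T" using that unfolding N_def by auto
    then have "\<not> (\<exists>n::nat. T \<le> U (real n) \<omega>)" by (auto simp: not_le)
    then have "Aset T \<omega> = {}" using Aset_ne[OF w, of T] by blast
    then have "{\<tau>. 0 \<le> \<tau> \<and> T \<le> U \<tau> \<omega>} = {}" unfolding Aset_def .
    then show ?thesis unfolding inverse_subordinator_def by (simp only:)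
  qed
  have "{\<omega> \<in> space M. ?S \<omega> \<le> y} \<in> sets M" for y
  proof -
    have "{\<omega> \<in> space M. ?S \<omega> \<le> y} = (if Inf {} \<le> y then N else {}) \<union>
        (if 0 \<le> y then {\<omega> \<in> space M. T \<le> U y \<omega>} else {})"
    proof (intro set_eqI iffI)
      fix \<omega> assume "\<omega> \<in> {\<omega> \<in> space M. ?S \<omega> \<le> y}"
      then have w: "\<omega> \<in> space M" and le: "?S \<omega> \<le> y" by auto
      show "\<omega> \<in> (if Inf {} \<le> y then N else {}) \<union> (if 0 \<le> y then {\<omega> \<in> space M. T \<le> U y \<omega>} else {})"
      proof (cases "\<omega> \<in> N")
        case True then show ?thesis using SN le by auto
      next
        case False
        then have ne: "Aset T \<omega> \<noteq> {}" using Aset_ne[OF w] w unfolding N_def by (auto simp: not_less)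
        have y: "0 \<le> y" using S_nonneg[OF ne] le by simp
        then show ?thesis using S_le_iff[OF w ne y] le w by simp
      qed
    next
      fix \<omega> assume a: "\<omega> \<in> (if Inf {} \<le> y then N else {}) \<union> (if 0 \<le> y then {\<omega> \<in> space M. T \<le> U y \<omega>} else {})"
      show "\<omega> \<in> {\<omega> \<in> space M. ?S \<omega> \<le> y}"
      proof (cases "\<omega> \<in> N")
        case True
        then have w: "\<omega> \<in> space M" and "\<forall>n::nat. U (real n) \<omega> < T" unfolding N_def by auto
        then have "\<not> (\<exists>n::nat. T \<le> U (real n) \<omega>)" by (auto simp: not_le)
        then have "Aset T \<omega> = {}" using Aset_ne[OF w, of T] by blast
        then have "\<not> (0 \<le> y \<and> T \<le> U y \<omega>)" unfolding Aset_def by auto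
        then have "Inf {} \<le> y" using a by (auto split: if_splits)
        then show ?thesis using SN[OF True] w by simp
      next
        case False
        then have w: "\<omega> \<in> space M" and y: "0 \<le> y" and T: "T \<le> U y \<omega>"
          using a by (auto split: if_splits)
        then have ne: "Aset T \<omega> \<noteq> {}" unfolding Aset_def by auto
        show ?thesis using S_le_iff[OF w ne y] T w by simp
      qed
    qed
    moreover have "{\<omega> \<in> space M. T \<le> U y \<omega>} \<in> sets M" if "0 \<le> y"
      using Um[OF that] by measurable
    ultimately show ?thesis using Nm by auto
  qed
  then show ?thesis by (simp add: borel_measurable_iff_le)
qed

lemma S_gt_sub: "\<omega> \<in> space M \<Longrightarrow> 0 \<le> \<tau> \<Longrightarrow> \<tau> < inverse_subordinator U T \<omega> \<Longrightarrow> U \<tau> \<omega> < T"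
proof (rule ccontr)
  assume "\<omega> \<in> space M" "0 \<le> \<tau>" "\<tau> < inverse_subordinator U T \<omega>" "\<not> U \<tau> \<omega> < T"
  then have "\<tau> \<in> Aset T \<omega>" unfolding Aset_def by auto
  moreover have bdd: "bdd_below (Aset T \<omega>)" unfolding Aset_def by (rule bdd_belowI[of _ 0]) auto
  ultimately have "inverse_subordinator U T \<omega> \<le> \<tau>"
    unfolding inverse_subordinator_def Aset_def[symmetric] by (rule cInf_lower)
  with \<open>\<tau> < inverse_subordinator U T \<omega>\<close> show False by simp
qed

end


lemma nnFTC:
  fixes f F :: "real \<Rightarrow> real"
  assumes ab: "a \<le> b" and cF: "continuous_on {a..b} F" and dF: "\<And>x. a < x \<Longrightarrow> x < b \<Longrightarrow> DERIV F x :> f x"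
    and f0: "\<And>x. a \<le> x \<Longrightarrow> x \<le> b \<Longrightarrow> 0 \<le> f x" and fm[measurable]: "f \<in> borel_measurable borel"
  shows "(\<integral>\<^sup>+x. ennreal (f x) * indicator {a..b} x \<partial>lborel) = ennreal (F b - F a)"
proof -
  have "(f has_integral F b - F a) {a..b}"
    by (rule fundamental_theorem_of_calculus_interior[OF ab cF])
       (auto simp: has_real_derivative_iff_has_vector_derivative[symmetric] intro!: dF)
  then have "((\<lambda>x. if x \<in> {a..b} then f x else 0) has_integral F b - F a) UNIV"
    by (simp only: has_integral_restrict_UNIV)
  then have hi: "((\<lambda>x. f x * indicator {a..b} x) has_integral F b - F a) UNIV"
    by (rule has_integral_eq[rotated]) (simp add: indicator_def)
  have "integral\<^sup>N lborel (\<lambda>x. f x * indicator {a..b} x) = F b - F a"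
    by (intro nn_integral_has_integral_lborel[OF _ _ hi]) (auto simp: indicator_def f0)
  moreover have "(\<integral>\<^sup>+x. ennreal (f x) * indicator {a..b} x \<partial>lborel) = integral\<^sup>N lborel (\<lambda>x. f x * indicator {a..b} x)"
    by (rule nn_integral_cong) (auto simp: indicator_def)
  ultimately show ?thesis by simp
qed

lemma nnGamma:
  assumes r: "0 < r"
  shows "(\<integral>\<^sup>+t. ennreal (t powr (r - 1) / exp t) * indicator {0..} t \<partial>lborel) = ennreal (Gamma r)"
proof -
  have "((\<lambda>t. if t \<in> {0..} then t powr (r - 1) / exp t else 0) has_integral Gamma r) UNIV"
    using Gamma_integral_real[OF r] by (simp only: has_integral_restrict_UNIV)
  then have hi: "((\<lambda>t. t powr (r - 1) / exp t * indicator {0..} t) has_integral Gamma r) UNIV"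
    by (rule has_integral_eq[rotated]) (simp add: indicator_def)
  have "integral\<^sup>N lborel (\<lambda>t. t powr (r - 1) / exp t * indicator {0..} t) = Gamma r"
    by (intro nn_integral_has_integral_lborel[OF _ _ hi]) (auto simp: indicator_def)
  moreover have "(\<integral>\<^sup>+t. ennreal (t powr (r - 1) / exp t) * indicator {0..} t \<partial>lborel) = integral\<^sup>N lborel (\<lambda>t. t powr (r - 1) / exp t * indicator {0..} t)"
    by (rule nn_integral_cong) (auto simp: indicator_def)
  ultimately show ?thesis by simp
qed

lemma nnexp_tail:
  "(\<integral>\<^sup>+t. ennreal (exp (- t)) * indicator {c..} t \<partial>lborel) = ennreal (exp (- c))"
proof -
  have "(\<integral>\<^sup>+t. ennreal (exp (- t)) * indicator {c..} t \<partial>lborel) = ennreal (0 - (\<lambda>t. - exp (- t)) c)"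
  proof (rule nn_integral_FTC_atLeast)
    have "((\<lambda>t::real. exp (- t)) \<longlongrightarrow> 0) at_top"
      by (rule filterlim_compose[OF exp_at_bot filterlim_uminus_at_bot_at_top])
    from tendsto_minus[OF this] show "((\<lambda>t::real. - exp (- t)) \<longlongrightarrow> 0) at_top" by simp
  qed (auto intro!: derivative_eq_intros)
  then show ?thesis by simp
qed

lemma powr_FTC:
  assumes b: "0 \<le> b"
  shows "(\<integral>\<^sup>+x. ennreal (3/2 * x powr (1/2)) * indicator {0..b} x \<partial>lborel) = ennreal (b powr (3/2))"
proof -
  have "(\<integral>\<^sup>+x. ennreal (3/2 * x powr (1/2)) * indicator {0..b} x \<partial>lborel) = ennreal ((\<lambda>x. x powr (3/2)) b - (\<lambda>x. x powr (3/2)) 0)"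
  proof (rule nnFTC[OF b])
    show "continuous_on {0..b} (\<lambda>x. x powr (3/2))"
      by (intro continuous_on_powr' continuous_intros) auto
    fix x :: real assume "0 < x" "x < b"
    then show "DERIV (\<lambda>x. x powr (3/2)) x :> 3/2 * x powr (1/2)"
      using has_real_derivative_powr[of x "3/2"] by simp
  qed auto
  then show ?thesis by simp
qed



lemma hlem:
  assumes x: "0 < x" and t: "0 \<le> t" and al: "0 < \<alpha>"
  shows "(\<integral>\<^sup>+\<tau>. ennreal (3/2 * \<tau> powr (1/2)) * indicator {0..} \<tau> * (if \<tau> powr (1/\<alpha>) * x \<le> t then 1 else 0) \<partial>lborel)
     = ennreal ((t / x) powr (3/2 * \<alpha>))"
proof -
  have y: "0 \<le> t / x" using x t by simp
  have iff: "\<tau> powr (1/\<alpha>) * x \<le> t \<longleftrightarrow> \<tau> \<le> (t / x) powr \<alpha>" if "0 \<le> \<tau>" for \<tau>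
  proof -
    have "\<tau> powr (1/\<alpha>) * x \<le> t \<longleftrightarrow> \<tau> powr (1/\<alpha>) \<le> t / x" using x by (simp add: field_simps)
    also have "\<dots> \<longleftrightarrow> \<tau> \<le> (t / x) powr \<alpha>"
    proof
      assume "\<tau> powr (1/\<alpha>) \<le> t / x"
      then have "(\<tau> powr (1/\<alpha>)) powr \<alpha> \<le> (t / x) powr \<alpha>"
        using al that by (intro powr_mono2) auto
      then show "\<tau> \<le> (t / x) powr \<alpha>" using al that by (simp add: powr_powr)
    next
      assume "\<tau> \<le> (t / x) powr \<alpha>"
      then have "\<tau> powr (1/\<alpha>) \<le> ((t / x) powr \<alpha>) powr (1/\<alpha>)"
        using al that by (intro powr_mono2) auto
      then show "\<tau> powr (1/\<alpha>) \<le> t / x" using al y by (simp add: powr_powr)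
    qed
    finally show ?thesis .
  qed
  have "(\<integral>\<^sup>+\<tau>. ennreal (3/2 * \<tau> powr (1/2)) * indicator {0..} \<tau> * (if \<tau> powr (1/\<alpha>) * x \<le> t then 1 else 0) \<partial>lborel)
     = (\<integral>\<^sup>+\<tau>. ennreal (3/2 * \<tau> powr (1/2)) * indicator {0..(t/x) powr \<alpha>} \<tau> \<partial>lborel)"
    by (rule nn_integral_cong) (auto simp: indicator_def iff)
  also have "\<dots> = ennreal (((t/x) powr \<alpha>) powr (3/2))" by (rule powr_FTC) simp
  also have "\<dots> = ennreal ((t / x) powr (3/2 * \<alpha>))" by (simp add: powr_powr mult.commute)
  finally show ?thesis .
qed

context stab begin

lemma L_cmp:
  assumes tau: "0 \<le> \<tau>"
  shows "prob {\<omega>\<in>space M. U \<tau> \<omega> < T} \<le> prob {\<omega>\<in>space M. \<tau> powr (1/\<alpha>) * U 1 \<omega> \<le> T}"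
proof (rule laplace_cmp)
  show "U \<tau> \<in> borel_measurable M" by (rule Um[OF tau])
  show "(\<lambda>\<omega>. \<tau> powr (1/\<alpha>) * U 1 \<omega>) \<in> borel_measurable M" by measurable
  show "\<And>x. x \<in> space M \<Longrightarrow> 0 \<le> U \<tau> x" using Unn tau by blast
  show "\<And>x. x \<in> space M \<Longrightarrow> 0 \<le> \<tau> powr (1/\<alpha>) * U 1 x" using Unn by simp
  fix n :: nat
  have "expectation (\<lambda>x. exp (- real n * U \<tau> x)) = exp (- \<tau> * real n powr \<alpha>)"
    using Ulap[OF tau, of "real n"] by simp
  moreover have "expectation (\<lambda>x. exp (- real n * (\<tau> powr (1/\<alpha>) * U 1 x))) = exp (- 1 * (real n * \<tau> powr (1/\<alpha>)) powr \<alpha>)"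
    using Ulap[of 1 "real n * \<tau> powr (1/\<alpha>)"] by (simp add: mult.assoc)
  moreover have "(real n * \<tau> powr (1/\<alpha>)) powr \<alpha> = \<tau> * real n powr \<alpha>"
    using tau a0 by (simp add: powr_mult powr_powr)
  ultimately show "expectation (\<lambda>x. exp (- real n * U \<tau> x)) = expectation (\<lambda>x. exp (- real n * (\<tau> powr (1/\<alpha>) * U 1 x)))"
    by simp
qed

lemma L_pos: "AE \<omega> in M. 0 < U 1 \<omega>"
proof -
  let ?Z = "{\<omega>\<in>space M. U 1 \<omega> \<le> 0}"
  have Zm: "?Z \<in> sets M" by measurable
  have le: "prob ?Z \<le> exp (- real n)" for n :: nat
  proof -
    define u where "u = real n powr (1/\<alpha>)"
    have u0: "0 \<le> u" by (simp add: u_def)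
    have "prob ?Z = expectation (indicator ?Z)" using Zm by simp
    also have "\<dots> \<le> expectation (\<lambda>\<omega>. exp (- u * U 1 \<omega>))"
    proof (rule integral_mono)
      show "integrable M (indicator ?Z :: 'a \<Rightarrow> real)"
        by (rule integrable_real_indicator) (auto simp: less_top[symmetric])
      show "integrable M (\<lambda>\<omega>. exp (- u * U 1 \<omega>))"
        by (rule bdd_int[where B=1]) (use u0 Unn in auto)
      fix \<omega> assume w: "\<omega> \<in> space M"
      show "indicator ?Z \<omega> \<le> exp (- u * U 1 \<omega>)"
        using Unn[OF w, of 1] by (auto simp: indicator_def)
    qed
    also have "\<dots> = exp (- 1 * u powr \<alpha>)" by (rule Ulap) (auto simp: u0)
    also have "\<dots> = exp (- real n)" using a0 by (simp add: u_def powr_powr)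
    finally show ?thesis .
  qed
  have lim: "(\<lambda>n. inverse (real (Suc n))) \<longlonglongrightarrow> 0" by (rule LIMSEQ_inverse_real_of_nat)
  have "prob ?Z \<le> inverse (real (Suc n))" for n
  proof -
    have "1 + real n \<le> exp (real n)" by (rule exp_ge_add_one_self)
    then have "exp (- real n) \<le> inverse (real (Suc n))"
      by (simp add: exp_minus le_imp_inverse_le)
    then show ?thesis using le[of n] by simp
  qed
  then have "prob ?Z \<le> 0" using lim by (intro LIMSEQ_le_const) auto
  then have "prob ?Z = 0" using measure_nonneg[of M ?Z] by linarith
  then have "?Z \<in> null_sets M" using Zm by (simp add: null_sets_def emeasure_eq_measure)
  then show ?thesis by (rule AE_I') auto
qed

end


lemma ifint: "{\<omega>\<in>space N. P \<omega>} \<in> sets N \<Longrightarrow> (\<integral>\<^sup>+\<omega>. c * (if P \<omega> then 1 else 0) \<partial>N) = c * emeasure N {\<omega>\<in>space N. P \<omega>}"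
proof -
  assume m: "{\<omega>\<in>space N. P \<omega>} \<in> sets N"
  have "(\<integral>\<^sup>+\<omega>. c * (if P \<omega> then 1 else 0) \<partial>N) = (\<integral>\<^sup>+\<omega>. c * indicator {\<omega>\<in>space N. P \<omega>} \<omega> \<partial>N)"
    by (rule nn_integral_cong) (auto simp: indicator_def)
  also have "\<dots> = c * emeasure N {\<omega>\<in>space N. P \<omega>}" by (rule nn_integral_cmult_indicator[OF m])
  finally show ?thesis .
qed

context stab begin

interpretation MP: pair_sigma_finite M lborel ..

lemma L_layer:
  assumes T: "0 \<le> T"
  shows "(\<integral>\<^sup>+\<omega>. ennreal (max 0 (inverse_subordinator U T \<omega>) powr (3/2)) \<partial>M)
     \<le> (\<integral>\<^sup>+\<omega>. ennreal ((T / U 1 \<omega>) powr (3/2*\<alpha>)) \<partial>M)"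
proof -
  let ?S = "inverse_subordinator U T"
  let ?f = "\<lambda>\<tau>::real. ennreal (3/2 * \<tau> powr (1/2)) * indicator {0..} \<tau>"
  have e1: "ennreal (max 0 (?S \<omega>) powr (3/2)) = (\<integral>\<^sup>+\<tau>. ?f \<tau> * (if \<tau> < max 0 (?S \<omega>) then 1 else 0) \<partial>lborel)" for \<omega>
  proof -
    have "ennreal (max 0 (?S \<omega>) powr (3/2)) = (\<integral>\<^sup>+\<tau>. ennreal (3/2 * \<tau> powr (1/2)) * indicator {0..max 0 (?S \<omega>)} \<tau> \<partial>lborel)"
      by (rule powr_FTC[symmetric]) simp
    also have "\<dots> = (\<integral>\<^sup>+\<tau>. ?f \<tau> * (if \<tau> < max 0 (?S \<omega>) then 1 else 0) \<partial>lborel)"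
    proof (rule nn_integral_cong_AE)
      define m where "m = max 0 (?S \<omega>)"
      have m0: "0 \<le> m" by (simp add: m_def)
      have "AE \<tau> in lborel. ennreal (3/2 * \<tau> powr (1/2)) * indicator {0..m} \<tau> = ?f \<tau> * (if \<tau> < m then 1 else 0)"
        using AE_lborel_singleton[of m] by eventually_elim (use m0 in \<open>auto simp: indicator_def\<close>)
      then show "AE \<tau> in lborel. ennreal (3/2 * \<tau> powr (1/2)) * indicator {0..max 0 (?S \<omega>)} \<tau> = ?f \<tau> * (if \<tau> < max 0 (?S \<omega>) then 1 else 0)"
        unfolding m_def .
    qed
    finally show ?thesis .
  qed
  have "(\<integral>\<^sup>+\<omega>. ennreal (max 0 (?S \<omega>) powr (3/2)) \<partial>M)
      = (\<integral>\<^sup>+\<omega>. (\<integral>\<^sup>+\<tau>. ?f \<tau> * (if \<tau> < max 0 (?S \<omega>) then 1 else 0) \<partial>lborel) \<partial>M)"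
    by (rule nn_integral_cong) (rule e1)
  also have "\<dots> = (\<integral>\<^sup>+\<tau>. (\<integral>\<^sup>+\<omega>. ?f \<tau> * (if \<tau> < max 0 (?S \<omega>) then 1 else 0) \<partial>M) \<partial>lborel)"
    by (rule MP.Fubini'[symmetric]) measurable
  also have "\<dots> = (\<integral>\<^sup>+\<tau>. ?f \<tau> * emeasure M {\<omega>\<in>space M. \<tau> < max 0 (?S \<omega>)} \<partial>lborel)"
    by (rule nn_integral_cong) (rule ifint, measurable)
  also have "\<dots> \<le> (\<integral>\<^sup>+\<tau>. ?f \<tau> * emeasure M {\<omega>\<in>space M. \<tau> powr (1/\<alpha>) * U 1 \<omega> \<le> T} \<partial>lborel)"
  proof (rule nn_integral_mono)
    fix \<tau> :: real
    show "?f \<tau> * emeasure M {\<omega>\<in>space M. \<tau> < max 0 (?S \<omega>)} \<le> ?f \<tau> * emeasure M {\<omega>\<in>space M. \<tau> powr (1/\<alpha>) * U 1 \<omega> \<le> T}"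
    proof (cases "0 \<le> \<tau>")
      case True
      have "emeasure M {\<omega>\<in>space M. \<tau> < max 0 (?S \<omega>)} \<le> emeasure M {\<omega>\<in>space M. U \<tau> \<omega> < T}"
      proof (rule emeasure_mono)
        show "{\<omega>\<in>space M. \<tau> < max 0 (?S \<omega>)} \<subseteq> {\<omega>\<in>space M. U \<tau> \<omega> < T}"
          using S_gt_sub True by auto
        show "{\<omega>\<in>space M. U \<tau> \<omega> < T} \<in> sets M" using Um[OF True] by measurable
      qed
      also have "\<dots> \<le> emeasure M {\<omega>\<in>space M. \<tau> powr (1/\<alpha>) * U 1 \<omega> \<le> T}"
        using L_cmp[OF True, of T] by (simp add: emeasure_eq_measure)
      finally show ?thesis by (rule mult_left_mono) simp
    qed simp
  qed
  also have "\<dots> = (\<integral>\<^sup>+\<tau>. (\<integral>\<^sup>+\<omega>. ?f \<tau> * (if \<tau> powr (1/\<alpha>) * U 1 \<omega> \<le> T then 1 else 0) \<partial>M) \<partial>lborel)"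
    by (rule nn_integral_cong) (rule ifint[symmetric], measurable)
  also have "\<dots> = (\<integral>\<^sup>+\<omega>. (\<integral>\<^sup>+\<tau>. ?f \<tau> * (if \<tau> powr (1/\<alpha>) * U 1 \<omega> \<le> T then 1 else 0) \<partial>lborel) \<partial>M)"
    by (rule MP.Fubini') measurable
  also have "\<dots> = (\<integral>\<^sup>+\<omega>. ennreal ((T / U 1 \<omega>) powr (3/2*\<alpha>)) \<partial>M)"
  proof (rule nn_integral_cong_AE)
    show "AE \<omega> in M. (\<integral>\<^sup>+\<tau>. ?f \<tau> * (if \<tau> powr (1/\<alpha>) * U 1 \<omega> \<le> T then 1 else 0) \<partial>lborel) = ennreal ((T / U 1 \<omega>) powr (3/2*\<alpha>))"
      using L_pos by eventually_elim (rule hlem[OF _ T a0])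
  qed
  finally show ?thesis .
qed

end


lemma Klem:
  assumes x: "0 < x" and al: "0 < \<alpha>"
  shows "ennreal (Gamma (3/2*\<alpha> + 1) * x powr (-(3/2*\<alpha>)))
    = (\<integral>\<^sup>+\<tau>. ennreal (3/2 * \<tau> powr (1/2)) * indicator {0..} \<tau> * ennreal (exp (- (\<tau> powr (1/\<alpha>) * x))) \<partial>lborel)"
proof -
  define a where "a = 3/2*\<alpha>"
  have a0: "0 < a" using al by (simp add: a_def)
  let ?f = "\<lambda>\<tau>::real. ennreal (3/2 * \<tau> powr (1/2)) * indicator {0..} \<tau>"
  let ?P = "\<lambda>\<tau> t. (if \<tau> powr (1/\<alpha>) * x \<le> t then 1 else 0 :: ennreal)"
  have "ennreal (Gamma (a + 1) * x powr (-a)) = ennreal (Gamma (a+1)) * ennreal (x powr (-a))"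
    using a0 by (simp add: ennreal_mult)
  also have "\<dots> = (\<integral>\<^sup>+t. ennreal (t powr (a + 1 - 1) / exp t) * indicator {0..} t \<partial>lborel) * ennreal (x powr (-a))"
    using nnGamma[of "a+1"] a0 by simp
  also have "\<dots> = (\<integral>\<^sup>+t. ennreal (t powr (a + 1 - 1) / exp t) * indicator {0..} t * ennreal (x powr (-a)) \<partial>lborel)"
    by (rule nn_integral_multc[symmetric]) measurable
  also have "\<dots> = (\<integral>\<^sup>+t. ennreal (exp (- t)) * indicator {0..} t * ennreal ((t / x) powr a) \<partial>lborel)"
  proof (rule nn_integral_cong)
    fix t :: real
    show "ennreal (t powr (a + 1 - 1) / exp t) * indicator {0..} t * ennreal (x powr (-a)) = ennreal (exp (- t)) * indicator {0..} t * ennreal ((t / x) powr a)"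
    proof (cases "0 \<le> t")
      case True
      have "t powr (a + 1 - 1) / exp t * x powr (-a) = exp (- t) * ((t / x) powr a)"
        using x True by (simp add: powr_divide powr_minus exp_minus field_simps)
      then show ?thesis using True x by (simp add: ennreal_mult[symmetric] mult.commute mult.left_commute)
    qed simp
  qed
  also have "\<dots> = (\<integral>\<^sup>+t. ennreal (exp (- t)) * indicator {0..} t * (\<integral>\<^sup>+\<tau>. ?f \<tau> * ?P \<tau> t \<partial>lborel) \<partial>lborel)"
  proof (rule nn_integral_cong)
    fix t :: real
    show "ennreal (exp (- t)) * indicator {0..} t * ennreal ((t / x) powr a) = ennreal (exp (- t)) * indicator {0..} t * (\<integral>\<^sup>+\<tau>. ?f \<tau> * ?P \<tau> t \<partial>lborel)"
    proof (cases "0 \<le> t")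
      case True
      then show ?thesis using hlem[OF x True al] by (simp add: a_def)
    qed simp
  qed
  also have "\<dots> = (\<integral>\<^sup>+t. (\<integral>\<^sup>+\<tau>. ennreal (exp (- t)) * indicator {0..} t * (?f \<tau> * ?P \<tau> t) \<partial>lborel) \<partial>lborel)"
    by (rule nn_integral_cong) (rule nn_integral_cmult[symmetric], measurable)
  also have "\<dots> = (\<integral>\<^sup>+\<tau>. (\<integral>\<^sup>+t. ennreal (exp (- t)) * indicator {0..} t * (?f \<tau> * ?P \<tau> t) \<partial>lborel) \<partial>lborel)"
    by (rule lborel_pair.Fubini') measurable
  also have "\<dots> = (\<integral>\<^sup>+\<tau>. ?f \<tau> * (\<integral>\<^sup>+t. ennreal (exp (- t)) * indicator {\<tau> powr (1/\<alpha>) * x..} t \<partial>lborel) \<partial>lborel)"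
  proof (rule nn_integral_cong)
    fix \<tau> :: real
    have c0: "0 \<le> \<tau> powr (1/\<alpha>) * x" using x by simp
    have "(\<integral>\<^sup>+t. ennreal (exp (- t)) * indicator {0..} t * (?f \<tau> * ?P \<tau> t) \<partial>lborel)
        = (\<integral>\<^sup>+t. ?f \<tau> * (ennreal (exp (- t)) * indicator {\<tau> powr (1/\<alpha>) * x..} t) \<partial>lborel)"
      by (rule nn_integral_cong) (use c0 in \<open>auto simp: indicator_def mult.commute\<close>)
    also have "\<dots> = ?f \<tau> * (\<integral>\<^sup>+t. ennreal (exp (- t)) * indicator {\<tau> powr (1/\<alpha>) * x..} t \<partial>lborel)"
      by (rule nn_integral_cmult) measurable
    finally show "(\<integral>\<^sup>+t. ennreal (exp (- t)) * indicator {0..} t * (?f \<tau> * ?P \<tau> t) \<partial>lborel)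
        = ?f \<tau> * (\<integral>\<^sup>+t. ennreal (exp (- t)) * indicator {\<tau> powr (1/\<alpha>) * x..} t \<partial>lborel)" .
  qed
  also have "\<dots> = (\<integral>\<^sup>+\<tau>. ?f \<tau> * ennreal (exp (- (\<tau> powr (1/\<alpha>) * x))) \<partial>lborel)"
    by (simp only: nnexp_tail)
  finally show ?thesis by (simp add: a_def)
qed

context stab begin

interpretation MP: pair_sigma_finite M lborel ..

lemma L_U1:
  "(\<integral>\<^sup>+\<omega>. ennreal (U 1 \<omega> powr (-(3/2*\<alpha>))) \<partial>M) = ennreal (Gamma (5/2) / Gamma (3/2*\<alpha> + 1))"
proof -
  define G where "G = Gamma (3/2*\<alpha> + 1)"
  have G0: "0 < G" unfolding G_def using a0 by simp
  let ?f = "\<lambda>\<tau>::real. ennreal (3/2 * \<tau> powr (1/2)) * indicator {0..} \<tau>"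
  have "ennreal G * (\<integral>\<^sup>+\<omega>. ennreal (U 1 \<omega> powr (-(3/2*\<alpha>))) \<partial>M) = (\<integral>\<^sup>+\<omega>. ennreal G * ennreal (U 1 \<omega> powr (-(3/2*\<alpha>))) \<partial>M)"
    by (rule nn_integral_cmult[symmetric]) measurable
  also have "\<dots> = (\<integral>\<^sup>+\<omega>. ennreal (G * U 1 \<omega> powr (-(3/2*\<alpha>))) \<partial>M)"
    using G0 by (simp add: ennreal_mult)
  also have "\<dots> = (\<integral>\<^sup>+\<omega>. (\<integral>\<^sup>+\<tau>. ?f \<tau> * ennreal (exp (- (\<tau> powr (1/\<alpha>) * U 1 \<omega>))) \<partial>lborel) \<partial>M)"
  proof (rule nn_integral_cong_AE)
    show "AE \<omega> in M. ennreal (G * U 1 \<omega> powr (-(3/2*\<alpha>))) = (\<integral>\<^sup>+\<tau>. ?f \<tau> * ennreal (exp (- (\<tau> powr (1/\<alpha>) * U 1 \<omega>))) \<partial>lborel)"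
      using L_pos by eventually_elim (unfold G_def, rule Klem[OF _ a0])
  qed
  also have "\<dots> = (\<integral>\<^sup>+\<tau>. (\<integral>\<^sup>+\<omega>. ?f \<tau> * ennreal (exp (- (\<tau> powr (1/\<alpha>) * U 1 \<omega>))) \<partial>M) \<partial>lborel)"
    by (rule MP.Fubini'[symmetric]) measurable
  also have "\<dots> = (\<integral>\<^sup>+\<tau>. ennreal (3/2) * (ennreal (\<tau> powr (3/2 - 1) / exp \<tau>) * indicator {0..} \<tau>) \<partial>lborel)"
  proof (rule nn_integral_cong)
    fix \<tau> :: real
    show "(\<integral>\<^sup>+\<omega>. ?f \<tau> * ennreal (exp (- (\<tau> powr (1/\<alpha>) * U 1 \<omega>))) \<partial>M) = ennreal (3/2) * (ennreal (\<tau> powr (3/2 - 1) / exp \<tau>) * indicator {0..} \<tau>)"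
    proof (cases "0 \<le> \<tau>")
      case True
      have "(\<integral>\<^sup>+\<omega>. ?f \<tau> * ennreal (exp (- (\<tau> powr (1/\<alpha>) * U 1 \<omega>))) \<partial>M) = ?f \<tau> * (\<integral>\<^sup>+\<omega>. ennreal (exp (- (\<tau> powr (1/\<alpha>) * U 1 \<omega>))) \<partial>M)"
        by (rule nn_integral_cmult) measurable
      also have "(\<integral>\<^sup>+\<omega>. ennreal (exp (- (\<tau> powr (1/\<alpha>) * U 1 \<omega>))) \<partial>M) = ennreal (expectation (\<lambda>\<omega>. exp (- (\<tau> powr (1/\<alpha>)) * U 1 \<omega>)))"
        by (subst nn_integral_eq_integral[symmetric])
           (auto intro!: bdd_int[where B=1] Unn mult_nonneg_nonneg)
      also have "expectation (\<lambda>\<omega>. exp (- (\<tau> powr (1/\<alpha>)) * U 1 \<omega>)) = exp (- 1 * (\<tau> powr (1/\<alpha>)) powr \<alpha>)"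
        by (rule Ulap) auto
      also have "exp (- 1 * (\<tau> powr (1/\<alpha>)) powr \<alpha>) = exp (- \<tau>)"
        using True a0 by (simp add: powr_powr)
      finally show ?thesis using True
        by (simp add: ennreal_mult[symmetric] exp_minus field_simps)
    qed simp
  qed
  also have "\<dots> = ennreal (3/2) * ennreal (Gamma (3/2))"
    using nnGamma[of "3/2"] by (subst nn_integral_cmult) auto
  also have "\<dots> = ennreal (Gamma (5/2))"
  proof -
    have "Gamma (3/2 + 1) = 3/2 * Gamma (3/2::real)"
      by (rule Gamma_plus1) (auto simp: nonpos_Ints_def)
    then show ?thesis by (simp add: ennreal_mult[symmetric])
  qed
  finally have eq: "ennreal G * (\<integral>\<^sup>+\<omega>. ennreal (U 1 \<omega> powr (-(3/2*\<alpha>))) \<partial>M) = ennreal (Gamma (5/2))" .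
  have "(\<integral>\<^sup>+\<omega>. ennreal (U 1 \<omega> powr (-(3/2*\<alpha>))) \<partial>M) = ennreal (1 / G) * (ennreal G * (\<integral>\<^sup>+\<omega>. ennreal (U 1 \<omega> powr (-(3/2*\<alpha>))) \<partial>M))"
    using G0 by (simp add: mult.assoc[symmetric] ennreal_mult[symmetric])
  also have "\<dots> = ennreal (Gamma (5/2) / G)"
    unfolding eq using G0 by (simp add: ennreal_mult[symmetric])
  finally show ?thesis by (simp add: G_def)
qed

end


lemma Phi_mono: "mono Phi"
proof (rule monoI)
  fix x y :: real assume "x \<le> y"
  then show "Phi x \<le> Phi y" unfolding Phi_eq
    by (intro integral_mono phi_ind_int) (auto simp: indicator_def)
qed

lemma Phi_meas[measurable]: "Phi \<in> borel_measurable borel"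
  by (rule borel_measurable_mono[OF Phi_mono])

lemma sqrt_le: "0 \<le> s \<Longrightarrow> sqrt s \<le> 1 + s powr (3/2)"
proof -
  assume s: "0 \<le> s"
  show ?thesis
  proof (cases "s \<le> 1")
    case True then have "sqrt s \<le> 1" by simp
    then show ?thesis by (smt (verit) powr_ge_zero)
  next
    case False
    have "sqrt s = s powr (1/2)" using s by (simp add: powr_half_sqrt)
    also have "\<dots> \<le> s powr (3/2)" using False by (intro powr_mono) auto
    finally show ?thesis by simp
  qed
qed

lemma sqrt3: "0 \<le> s \<Longrightarrow> sqrt s ^ 3 = s powr (3/2)"
proof -
  assume s: "0 \<le> s"
  have "sqrt s ^ 3 = (s powr (1/2)) ^ 3" using s by (simp add: powr_half_sqrt)
  also have "\<dots> = s powr (of_nat 3 * (1/2))"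
    by (cases "s = 0") (simp_all add: powr_power)
  finally show ?thesis by simp
qed

context stab begin

lemma N_null:
  assumes T: "0 < T"
  shows "AE \<omega> in M. 0 \<le> inverse_subordinator U T \<omega>"
proof -
  let ?N = "{\<omega> \<in> space M. \<forall>n::nat. U (real n) \<omega> < T}"
  have Nm: "?N \<in> sets M" by measurable
  have le: "prob ?N \<le> exp T * inverse (real (Suc n))" for n :: nat
  proof -
    have "prob ?N \<le> prob {\<omega> \<in> space M. U (real n) \<omega> < T}" by (rule finite_measure_mono) auto
    also have "\<dots> = expectation (indicator {\<omega> \<in> space M. U (real n) \<omega> < T})" by simp
    also have "\<dots> \<le> expectation (\<lambda>\<omega>. exp T * exp (- 1 * U (real n) \<omega>))"
    proof (rule integral_mono)
      show "integrable M (indicator {\<omega> \<in> space M. U (real n) \<omega> < T} :: 'a \<Rightarrow> real)"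
        by (rule integrable_real_indicator) (auto simp: less_top[symmetric])
      show "integrable M (\<lambda>\<omega>. exp T * exp (- 1 * U (real n) \<omega>))"
        by (rule bdd_int[where B="exp T"]) (use Unn in auto)
      fix \<omega> assume w: "\<omega> \<in> space M"
      show "indicator {\<omega> \<in> space M. U (real n) \<omega> < T} \<omega> \<le> exp T * exp (- 1 * U (real n) \<omega>)"
      proof (cases "U (real n) \<omega> < T")
        case True
        then have "1 \<le> exp (T - U (real n) \<omega>)" by simp
        then show ?thesis using True w by (simp add: exp_diff exp_minus field_simps)
      qed (simp add: indicator_def)
    qed
    also have "\<dots> = exp T * exp (- real n * 1 powr \<alpha>)"
      using Ulap[of "real n" 1] by (subst integral_mult_right_zero) simp
    also have "\<dots> \<le> exp T * inverse (real (Suc n))"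
    proof -
      have "1 + real n \<le> exp (real n)" by (rule exp_ge_add_one_self)
      then have "exp (- real n) \<le> inverse (real (Suc n))"
        by (simp add: exp_minus le_imp_inverse_le)
      then show ?thesis by simp
    qed
    finally show ?thesis .
  qed
  have lim: "(\<lambda>n. exp T * inverse (real (Suc n))) \<longlonglongrightarrow> 0"
    using tendsto_mult_right_zero[OF LIMSEQ_inverse_real_of_nat, of "exp T"] .
  have "prob ?N \<le> 0" using LIMSEQ_le_const[OF lim, of "prob ?N"] le by blast
  then have "prob ?N = 0" using measure_nonneg[of M ?N] by linarith
  then have null: "?N \<in> null_sets M" using Nm by (simp add: null_sets_def emeasure_eq_measure)
  show ?thesis
  proof (rule AE_I'[OF null])
    show "{\<omega> \<in> space M. \<not> 0 \<le> inverse_subordinator U T \<omega>} \<subseteq> ?N"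
    proof
      fix \<omega> assume a: "\<omega> \<in> {\<omega> \<in> space M. \<not> 0 \<le> inverse_subordinator U T \<omega>}"
      then have w: "\<omega> \<in> space M" by simp
      have "Aset T \<omega> = {}" using S_nonneg[of T \<omega>] a by auto
      then show "\<omega> \<in> ?N" using Aset_ne[OF w, of T] w by (auto simp: not_le)
    qed
  qed
qed

lemma main_loc:
  assumes T: "0 < T" and s: "0 < \<sigma>" and Z: "0 < Z0"
  defines "S \<equiv> inverse_subordinator U T"
  shows "0 \<le> (\<integral>\<omega>. bachelier_atm (\<sigma> * Z0) (S \<omega>) \<partial>M) - (\<integral>\<omega>. bs_atm Z0 \<sigma> (S \<omega>) \<partial>M)
    \<and> (\<integral>\<omega>. bachelier_atm (\<sigma> * Z0) (S \<omega>) \<partial>M) - (\<integral>\<omega>. bs_atm Z0 \<sigma> (S \<omega>) \<partial>M)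
        \<le> T powr (3/2 * \<alpha>) * Gamma (5/2) / Gamma (3/2 * \<alpha> + 1)
           * (Z0 / (12 * sqrt (2 * pi))) * \<sigma> ^ 3"
proof -
  have Sm[measurable]: "S \<in> borel_measurable M" unfolding S_def by (rule S_meas)
  have S0: "AE \<omega> in M. 0 \<le> S \<omega>" unfolding S_def by (rule N_null[OF T])
  define bd where "bd = T powr (3/2 * \<alpha>) * (Gamma (5/2) / Gamma (3/2 * \<alpha> + 1))"
  have bd0: "0 \<le> bd" unfolding bd_def using a0 by simp
  let ?P = "\<lambda>\<omega>. max 0 (S \<omega>) powr (3/2)"
  have nn: "(\<integral>\<^sup>+\<omega>. ennreal (?P \<omega>) \<partial>M) \<le> ennreal bd"
  proof -
    have "(\<integral>\<^sup>+\<omega>. ennreal (?P \<omega>) \<partial>M) \<le> (\<integral>\<^sup>+\<omega>. ennreal ((T / U 1 \<omega>) powr (3/2*\<alpha>)) \<partial>M)"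
      unfolding S_def by (rule L_layer) (use T in simp)
    also have "\<dots> = (\<integral>\<^sup>+\<omega>. ennreal (T powr (3/2*\<alpha>)) * ennreal (U 1 \<omega> powr (-(3/2*\<alpha>))) \<partial>M)"
    proof (rule nn_integral_cong)
      fix \<omega>
      have "(T / U 1 \<omega>) powr (3/2*\<alpha>) = T powr (3/2*\<alpha>) * U 1 \<omega> powr (-(3/2*\<alpha>))"
        unfolding powr_divide powr_minus by (simp only: divide_inverse)
      then show "ennreal ((T / U 1 \<omega>) powr (3/2*\<alpha>)) = ennreal (T powr (3/2*\<alpha>)) * ennreal (U 1 \<omega> powr (-(3/2*\<alpha>)))"
        by (simp only: ennreal_mult[symmetric] powr_ge_zero)
    qed
    also have "\<dots> = ennreal (T powr (3/2*\<alpha>)) * (\<integral>\<^sup>+\<omega>. ennreal (U 1 \<omega> powr (-(3/2*\<alpha>))) \<partial>M)"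
      by (rule nn_integral_cmult) measurable
    also have "\<dots> = ennreal bd" unfolding L_U1 bd_def
      by (rule ennreal_mult[symmetric]) (use a0 in auto)
    finally show ?thesis .
  qed
  have iP: "integrable M ?P"
    by (rule integrableI_nonneg) (use nn in \<open>auto simp: top.not_eq_extremum order_le_less_trans\<close>)
  have EP: "expectation ?P \<le> bd"
  proof -
    have "ennreal (expectation ?P) = (\<integral>\<^sup>+\<omega>. ennreal (?P \<omega>) \<partial>M)"
      by (rule nn_integral_eq_integral[symmetric]) (auto intro: iP)
    then have "ennreal (expectation ?P) \<le> ennreal bd" using nn by (simp only:)
    then show ?thesis using bd0 by (simp add: ennreal_le_iff)
  qed
  define c where "c = Z0 * \<sigma>^3 / (24 * sqrt (2*pi))"
  have c0: "0 \<le> c" unfolding c_def using s Z by simp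
  let ?Ba = "\<lambda>\<omega>. bachelier_atm (\<sigma> * Z0) (S \<omega>)"
  let ?Bs = "\<lambda>\<omega>. bs_atm Z0 \<sigma> (S \<omega>)"
  have mBa[measurable]: "?Ba \<in> borel_measurable M" unfolding bachelier_atm_def by measurable
  have mBs[measurable]: "?Bs \<in> borel_measurable M" unfolding bs_atm_def by measurable
  have pw: "AE \<omega> in M. 0 \<le> ?Ba \<omega> - ?Bs \<omega> \<and> ?Ba \<omega> - ?Bs \<omega> \<le> c * ?P \<omega>"
    using S0
  proof eventually_elim
    case (elim \<omega>)
    then show ?case using pointwise[OF elim s Z] sqrt3[OF elim] by (simp add: c_def)
  qed
  have iBa: "integrable M ?Ba"
  proof (rule Bochner_Integration.integrable_bound[OF _ mBa])
    show "integrable M (\<lambda>\<omega>. (\<sigma> * Z0 / sqrt (2*pi)) * (1 + ?P \<omega>))"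
      using iP by (intro integrable_mult_right Bochner_Integration.integrable_add) auto
    show "AE \<omega> in M. norm (?Ba \<omega>) \<le> norm ((\<sigma> * Z0 / sqrt (2*pi)) * (1 + ?P \<omega>))"
      using S0
    proof eventually_elim
      case (elim \<omega>)
      have "sqrt (S \<omega>) \<le> 1 + ?P \<omega>" using sqrt_le[OF elim] elim by simp
      then show ?case using elim s Z
        by (simp add: bachelier_atm_def abs_mult divide_right_mono mult_left_mono)
    qed
  qed
  have iD: "integrable M (\<lambda>\<omega>. ?Ba \<omega> - ?Bs \<omega>)"
  proof (rule Bochner_Integration.integrable_bound[OF _ _ ])
    show "integrable M (\<lambda>\<omega>. c * ?P \<omega>)" using iP by auto
    show "(\<lambda>\<omega>. ?Ba \<omega> - ?Bs \<omega>) \<in> borel_measurable M" by measurable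
    show "AE \<omega> in M. norm (?Ba \<omega> - ?Bs \<omega>) \<le> norm (c * ?P \<omega>)"
      using pw by eventually_elim (use c0 in auto)
  qed
  have iBs: "integrable M ?Bs"
  proof -
    have "integrable M (\<lambda>\<omega>. ?Ba \<omega> - (?Ba \<omega> - ?Bs \<omega>))"
      by (rule Bochner_Integration.integrable_diff[OF iBa iD])
    then show ?thesis by simp
  qed
  have eq: "(\<integral>\<omega>. ?Ba \<omega> \<partial>M) - (\<integral>\<omega>. ?Bs \<omega> \<partial>M) = (\<integral>\<omega>. ?Ba \<omega> - ?Bs \<omega> \<partial>M)"
    using iBa iBs by simp
  have "0 \<le> (\<integral>\<omega>. ?Ba \<omega> - ?Bs \<omega> \<partial>M)"
    using pw by (intro integral_nonneg_AE) (auto elim: eventually_mono)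
  moreover have "(\<integral>\<omega>. ?Ba \<omega> - ?Bs \<omega> \<partial>M) \<le> (\<integral>\<omega>. c * ?P \<omega> \<partial>M)"
    using pw iD iP by (intro integral_mono_AE) (auto elim: eventually_mono)
  moreover have "(\<integral>\<omega>. c * ?P \<omega> \<partial>M) \<le> c * bd" using EP c0 by (simp add: mult_left_mono)
  moreover have "c * bd \<le> T powr (3/2 * \<alpha>) * Gamma (5/2) / Gamma (3/2 * \<alpha> + 1) * (Z0 / (12 * sqrt (2 * pi))) * \<sigma> ^ 3"
  proof -
    have "c * bd = bd * (Z0 / (24 * sqrt (2*pi))) * \<sigma>^3" by (simp add: c_def)
    also have "\<dots> \<le> bd * (Z0 / (12 * sqrt (2*pi))) * \<sigma>^3"
      using bd0 Z s by (intro mult_right_mono mult_left_mono divide_left_mono) auto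
    finally show ?thesis by (simp add: bd_def)
  qed
  ultimately show ?thesis using eq by linarith
qed

end

theorem mainTheorem3:
  fixes M :: "'a measure" and U :: "real \<Rightarrow> 'a \<Rightarrow> real"
    and \<alpha> Z0 K r \<sigma> \<sigma>Ba T :: real
  assumes "0 < \<alpha>" and "\<alpha> < 1"
    and "stable_subordinator M \<alpha> U"
    and "K = Z0" and "0 < Z0" and "r = 0" and "0 < \<sigma>" and "\<sigma>Ba = \<sigma> * Z0" and "0 < T"
  defines "S \<equiv> inverse_subordinator U"
  shows "0 \<le> (\<integral>\<omega>. bachelier_atm \<sigma>Ba (S T \<omega>) \<partial>M) - (\<integral>\<omega>. bs_atm Z0 \<sigma> (S T \<omega>) \<partial>M)
    \<and> (\<integral>\<omega>. bachelier_atm \<sigma>Ba (S T \<omega>) \<partial>M) - (\<integral>\<omega>. bs_atm Z0 \<sigma> (S T \<omega>) \<partial>M)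
        \<le> T powr (3/2 * \<alpha>) * Gamma (5/2) / Gamma (3/2 * \<alpha> + 1)
           * (Z0 / (12 * sqrt (2 * pi))) * \<sigma> ^ 3"
proof -
  interpret stab M \<alpha> U by unfold_locales (use assms in auto)
  show ?thesis unfolding S_def \<open>\<sigma>Ba = \<sigma> * Z0\<close>
    by (rule main_loc) (use assms in auto)
qed



end
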